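(* Let $(b_1,\ldots,b_m,\alpha,\beta,\gamma)$ be a reduced Schubert problem with $\alpha\le\beta\le\gamma$ and $\alpha<\gamma$. Then $K(b_1,\ldots,b_m,\alpha,\beta+\gamma) < K(b_1,\ldots,b_m,\gamma,\beta+\alpha)$.
   Context: A Schubert problem is a finite list $a_\bullet=(a_1,\ldots,a_k)$ of positive integers with even sum; set $n(a_\bullet)=\frac12(a_1+\cdots+a_k+2)$. It is valid if $a_i\le n(a_\bullet)-1$ for all $i$, and reduced if it is valid and $a_i+a_j\le n(a_\bullet)-1$ for all $i<j$. For such a list, $K(a_\bullet)$ is the number of Young tableaux of shape $(n(a_\bullet)-1,n(a_\bullet)-1)$ and content $(a_1,\ldots,a_k)$: two-rowed arrays of integers, each row of length $n(a_\bullet)-1$, weakly increasing along rows, strictly increasing down columns, with exactly $a_i$ occurrences of $i$ for each $i$. *)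

theory Defs
  imports Main
begin

text \<open>A Schubert problem: a finite list of positive integers with even sum.
  Lists are 0-indexed in Isabelle; the entry a_i of the paper is a ! (i-1).\<close>

definition schubert_problem :: "nat list \<Rightarrow> bool" where
  "schubert_problem a \<longleftrightarrow> (\<forall>x\<in>set a. 0 < x) \<and> even (sum_list a)"

definition n_of :: "nat list \<Rightarrow> nat" where
  "n_of a = (sum_list a + 2) div 2"

definition valid :: "nat list \<Rightarrow> bool" where
  "valid a \<longleftrightarrow> schubert_problem a \<and> (\<forall>i<length a. a ! i \<le> n_of a - 1)"

definition reduced :: "nat list \<Rightarrow> bool" where
  "reduced a \<longleftrightarrow> valid a \<and>
     (\<forall>i j. i < j \<and> j < length a \<longrightarrow> a ! i + a ! j \<le> n_of a - 1)"

definition tableaux :: "nat list \<Rightarrow> (nat list \<times> nat list) set" where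
  "tableaux a = {(r1, r2).
     length r1 = n_of a - 1 \<and> length r2 = n_of a - 1 \<and>
     sorted r1 \<and> sorted r2 \<and>
     (\<forall>j < n_of a - 1. r1 ! j < r2 ! j) \<and>
     set (r1 @ r2) \<subseteq> {1..length a} \<and>
     (\<forall>i\<in>{1..length a}. count_list (r1 @ r2) i = a ! (i - 1))}"

definition K :: "nat list \<Rightarrow> nat" where
  "K a = card (tableaux a)"

end

theory Submission
  imports Defs
begin

lemma count_list_replicate: "count_list (replicate n a) v = (if a = v then n else 0)"
  by (induct n) auto

lemma sorted_split_filter:
  "sorted xs \<Longrightarrow> xs = filter (\<lambda>v. v \<le> (t::nat)) xs @ filter (\<lambda>v. \<not> v \<le> t) xs"
proof (induct xs)
  case Nil then show ?case by simp
next
  case (Cons a xs)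
  show ?case
  proof (cases "a \<le> t")
    case True then show ?thesis using Cons by auto
  next
    case False
    then have "\<forall>v\<in>set xs. \<not> v \<le> t" using Cons.prems by auto
    then have "filter (\<lambda>v. v \<le> t) xs = []" "filter (\<lambda>v. \<not> v \<le> t) xs = xs"
      by (auto simp: filter_empty_conv filter_id_conv)
    then show ?thesis using False by simp
  qed
qed

definition inner :: "nat list \<Rightarrow> nat list \<Rightarrow> nat list \<Rightarrow> bool" where
  "inner bs s1 s2 \<longleftrightarrow> sorted s1 \<and> sorted s2 \<and> length s2 \<le> length s1 \<and>
     (\<forall>j<length s2. s1!j < s2!j) \<and> set (s1@s2) \<subseteq> {1..length bs} \<and>
     (\<forall>i\<in>{1..length bs}. count_list (s1@s2) i = bs!(i-1))"

definition Iset :: "nat list \<Rightarrow> nat \<Rightarrow> nat \<Rightarrow> nat \<Rightarrow> (nat list \<times> nat list) set" where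
  "Iset bs N x y = {(s1,s2). inner bs s1 s2 \<and> length s1 \<le> N \<and> N \<le> x + length s1 \<and>
      x + length s2 \<le> N \<and> length s1 + length s2 + x + y = 2*N}"

definition Phi :: "nat list \<Rightarrow> nat \<Rightarrow> nat \<Rightarrow> nat \<Rightarrow> nat list \<times> nat list \<Rightarrow> nat list \<times> nat list" where
  "Phi bs N x y p = (fst p @ replicate (N - length (fst p)) (Suc (length bs)),
     snd p @ replicate (x + length (fst p) - N) (Suc (length bs)) @ replicate y (Suc (Suc (length bs))))"

lemma nof: "2*N = sum_list bs + x + y \<Longrightarrow> n_of (bs@[x,y]) - 1 = N"
  unfolding n_of_def by simp

lemma nth_bsxy: "i \<in> {1..length bs+2} \<Longrightarrow> (bs@[x,y])!(i-1) =
   (if i \<le> length bs then bs!(i-1) else if i = Suc (length bs) then x else y)"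
  by (auto simp: nth_append)

lemma Phi_in:
  assumes N: "2*N = sum_list bs + x + y" and p: "p \<in> Iset bs N x y"
  shows "Phi bs N x y p \<in> tableaux (bs@[x,y])"
proof -
  obtain s1 s2 where p': "p = (s1,s2)" by (cases p)
  define k where "k = length bs"
  have I: "inner bs s1 s2" "length s1 \<le> N" "N \<le> x + length s1" "x + length s2 \<le> N"
     "length s1 + length s2 + x + y = 2*N" using p p' unfolding Iset_def by auto
  note in1 = I(1)[unfolded inner_def]
  have s1k: "\<forall>v\<in>set s1. 1 \<le> v \<and> v \<le> k" and s2k: "\<forall>v\<in>set s2. 1 \<le> v \<and> v \<le> k"
    using in1 unfolding k_def by auto
  define r1 where "r1 = s1 @ replicate (N - length s1) (Suc k)"
  define r2 where "r2 = s2 @ replicate (x + length s1 - N) (Suc k) @ replicate y (Suc (Suc k))"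
  have Pe: "Phi bs N x y p = (r1, r2)" unfolding Phi_def r1_def r2_def k_def p' by simp
  have l1: "length r1 = N" unfolding r1_def using I by simp
  have l2: "length r2 = N" unfolding r2_def using I by simp
  have so1: "sorted r1" unfolding r1_def using in1 s1k
    by (auto simp: sorted_append)
  have so2: "sorted r2" unfolding r2_def using in1 s2k
    by (auto simp: sorted_append)
  have col: "\<forall>j<N. r1!j < r2!j"
  proof (intro allI impI)
    fix j assume j: "j < N"
    show "r1!j < r2!j"
    proof (cases "j < length s2")
      case True
      then have "j < length s1" using in1 by simp
      then show ?thesis using True in1 unfolding r1_def r2_def by (simp add: nth_append)
    next
      case False
      show ?thesis
      proof (cases "j < length s2 + (x + length s1 - N)")
        case True
        then have "j < length s1" using I by linarith
        then have "r1!j = s1!j" unfolding r1_def by (simp add: nth_append)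
        moreover have "s1!j \<le> k" using s1k \<open>j < length s1\<close> by auto
        moreover have "r2!j = Suc k" unfolding r2_def using True False
          by (simp add: nth_append)
        ultimately show ?thesis by simp
      next
        case False2: False
        have "r2!j = Suc (Suc k)" unfolding r2_def using False False2 j l2
          by (auto simp: nth_append r2_def)
        moreover have "r1!j \<le> Suc k" unfolding r1_def using s1k j I
          by (auto simp: nth_append dest!: nth_mem[of j s1])
        ultimately show ?thesis by simp
      qed
    qed
  qed
  have set: "set (r1@r2) \<subseteq> {1..length (bs@[x,y])}"
    using s1k s2k unfolding r1_def r2_def k_def by auto
  have cnt: "\<forall>i\<in>{1..length (bs@[x,y])}. count_list (r1@r2) i = (bs@[x,y])!(i-1)"
  proof
    fix i assume i: "i \<in> {1..length (bs@[x,y])}"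
    have e: "(bs@[x,y])!(i-1) = (if i \<le> k then bs!(i-1) else if i = Suc k then x else y)"
      using nth_bsxy[of i bs x y] i unfolding k_def by simp
    show "count_list (r1@r2) i = (bs@[x,y])!(i-1)"
    proof (cases "i \<le> k")
      case True
      then show ?thesis using e in1 i unfolding r1_def r2_def k_def
        by (auto simp: count_list_replicate)
    next
      case False
      have "i \<notin> set s1" "i \<notin> set s2" using s1k s2k False by auto
      then show ?thesis using e False i I unfolding r1_def r2_def k_def
        by (auto simp: count_list_replicate)
    qed
  qed
  have "(r1,r2) \<in> tableaux (bs@[x,y])"
    unfolding tableaux_def nof[OF N] using l1 l2 so1 so2 col set cnt by auto
  then show ?thesis using Pe by simp
qed

lemma replicate_of_all:
  "(\<forall>v\<in>set xs. v = c) \<Longrightarrow> xs = replicate (length xs) c"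
  by (simp add: replicate_length_same)

lemma tab_in_Phi:
  assumes N: "2*N = sum_list bs + x + y" and r: "(r1,r2) \<in> tableaux (bs@[x,y])"
  shows "(r1,r2) \<in> Phi bs N x y ` Iset bs N x y"
proof -
  define k where "k = length bs"
  have T: "length r1 = N" "length r2 = N" "sorted r1" "sorted r2"
     "\<forall>j<N. r1!j < r2!j" "set (r1@r2) \<subseteq> {1..k+2}"
     "\<forall>i\<in>{1..k+2}. count_list (r1@r2) i = (bs@[x,y])!(i-1)"
    using r unfolding tableaux_def nof[OF N] k_def by auto
  have le1: "\<forall>v\<in>set r1. v \<le> Suc k"
  proof
    fix v assume "v \<in> set r1"
    then obtain j where j: "j < N" "r1!j = v" using T(1) by (auto simp: in_set_conv_nth)
    have "r2!j \<in> set r2" using j T(2) by simp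
    then have "r2!j \<le> k+2" using T(6) by auto
    then show "v \<le> Suc k" using T(5) j by fastforce
  qed
  define s1 where "s1 = filter (\<lambda>v. v \<le> k) r1"
  define s2 where "s2 = filter (\<lambda>v. v \<le> k) r2"
  define t1 where "t1 = filter (\<lambda>v. \<not> v \<le> k) r1"
  define t2 where "t2 = filter (\<lambda>v. \<not> v \<le> k) r2"
  define u where "u = filter (\<lambda>v. v \<le> Suc k) t2"
  define w where "w = filter (\<lambda>v. \<not> v \<le> Suc k) t2"
  have r1e: "r1 = s1 @ t1" unfolding s1_def t1_def using sorted_split_filter[OF T(3)] .
  have r2e: "r2 = s2 @ t2" unfolding s2_def t2_def using sorted_split_filter[OF T(4)] .
  have st2: "sorted t2" unfolding t2_def using sorted_filter[of id r2] T(4) by simp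
  have t2e: "t2 = u @ w" unfolding u_def w_def using sorted_split_filter[OF st2] .
  have t1r: "t1 = replicate (length t1) (Suc k)"
    by (rule replicate_of_all) (use le1 in \<open>auto simp: t1_def\<close>)
  have ur: "u = replicate (length u) (Suc k)"
    by (rule replicate_of_all) (auto simp: u_def t2_def)
  have wr: "w = replicate (length w) (Suc (Suc k))"
    by (rule replicate_of_all) (use T(6) in \<open>auto simp: w_def t2_def\<close>)
  have s1k: "\<forall>v\<in>set s1. 1 \<le> v \<and> v \<le> k" using T(6) by (auto simp: s1_def)
  have s2k: "\<forall>v\<in>set s2. 1 \<le> v \<and> v \<le> k" using T(6) by (auto simp: s2_def)
  define a where "a = length t1"
  define b where "b = length u"
  define e where "e = length w"
  have R1: "r1 = s1 @ replicate a (Suc k)" using r1e t1r a_def by simp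
  have R2: "r2 = s2 @ replicate b (Suc k) @ replicate e (Suc (Suc k))"
    using r2e t2e ur wr b_def e_def by simp
  have nk1: "Suc k \<notin> set s1" "Suc k \<notin> set s2" "Suc (Suc k) \<notin> set s1" "Suc (Suc k) \<notin> set s2"
    using s1k s2k by auto
  have cx: "count_list (r1@r2) (Suc k) = x" using T(7)[rule_format, of "Suc k"]
    by (simp add: nth_append k_def)
  have cy: "count_list (r1@r2) (Suc (Suc k)) = y" using T(7)[rule_format, of "Suc (Suc k)"]
    by (simp add: nth_append k_def)
  have ax: "a + b = x" using cx nk1 unfolding R1 R2 by (simp add: count_list_replicate)
  have ey: "e = y" using cy nk1 unfolding R1 R2 by (simp add: count_list_replicate)
  have la: "length s1 + a = N" using T(1) R1 by simp
  have lb: "length s2 + b + e = N" using T(2) R2 by simp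
  have L21: "length s2 \<le> length s1"
  proof (rule ccontr)
    assume c: "\<not> length s2 \<le> length s1"
    let ?j = "length s1"
    have "?j < N" using c lb by linarith
    then have "r1 ! ?j = Suc k" unfolding R1 using la by (simp add: nth_append)
    moreover have "r2 ! ?j = s2 ! ?j" unfolding R2 using c by (simp add: nth_append)
    moreover have "s2 ! ?j \<le> k" using s2k c by (auto dest!: nth_mem[of ?j s2])
    ultimately show False using T(5) \<open>?j < N\<close> by fastforce
  qed
  have Lb: "length s2 + b \<le> length s1"
  proof (rule ccontr)
    assume c: "\<not> length s2 + b \<le> length s1"
    let ?j = "length s1"
    have "?j < N" using c lb by linarith
    then have "r1 ! ?j = Suc k" unfolding R1 using la by (simp add: nth_append)
    moreover have "r2 ! ?j = Suc k" unfolding R2 using c L21 by (simp add: nth_append)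
    ultimately show False using T(5) \<open>?j < N\<close> by fastforce
  qed
  have colS: "\<forall>j<length s2. s1!j < s2!j"
  proof (intro allI impI)
    fix j assume j: "j < length s2"
    then have "j < N" "j < length s1" using lb L21 by linarith+
    then show "s1!j < s2!j" using T(5) j unfolding R1 R2 by (auto simp: nth_append)
  qed
  have cntS: "\<forall>i\<in>{1..k}. count_list (s1@s2) i = bs!(i-1)"
  proof
    fix i assume i: "i \<in> {1..k}"
    have "count_list (r1@r2) i = count_list (s1@s2) i" unfolding R1 R2
      using i by (simp add: count_list_replicate)
    moreover have "(bs@[x,y])!(i-1) = bs!(i-1)" using i by (auto simp: nth_append k_def)
    ultimately show "count_list (s1@s2) i = bs!(i-1)" using T(7) i by auto
  qed
  have inn: "inner bs s1 s2" unfolding inner_def k_def[symmetric]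
  proof (intro conjI)
    show "sorted s1" unfolding s1_def using sorted_filter[of id r1] T(3) by simp
    show "sorted s2" unfolding s2_def using sorted_filter[of id r2] T(4) by simp
    show "set (s1 @ s2) \<subseteq> {1..k}" using s1k s2k by auto
  qed (use colS cntS L21 in auto)
  have "(s1,s2) \<in> Iset bs N x y" unfolding Iset_def using inn la lb ax ey Lb by auto
  moreover have "Phi bs N x y (s1,s2) = (r1,r2)"
  proof -
    have "N - length s1 = a" "x + length s1 - N = b" using la ax by linarith+
    then show ?thesis unfolding Phi_def R1 R2 k_def[symmetric] using ey by simp
  qed
  ultimately show ?thesis by force
qed

lemma Phi_inj: "inj_on (Phi bs N x y) (Iset bs N x y)"
proof (rule inj_onI)
  fix p q assume p: "p \<in> Iset bs N x y" and q: "q \<in> Iset bs N x y" and e: "Phi bs N x y p = Phi bs N x y q"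
  obtain s1 s2 where ps: "p = (s1,s2)" by (cases p)
  obtain s1' s2' where qs: "q = (s1',s2')" by (cases q)
  let ?k = "length bs"
  have "set s1 \<subseteq> {1..?k}" "set s2 \<subseteq> {1..?k}" "set s1' \<subseteq> {1..?k}" "set s2' \<subseteq> {1..?k}"
    using p q ps qs unfolding Iset_def inner_def by auto
  then have f: "filter (\<lambda>v. v \<le> ?k) s1 = s1" "filter (\<lambda>v. v \<le> ?k) s2 = s2"
     "filter (\<lambda>v. v \<le> ?k) s1' = s1'" "filter (\<lambda>v. v \<le> ?k) s2' = s2'"
    by (auto simp: filter_id_conv)
  have e1: "filter (\<lambda>v. v \<le> ?k) (fst (Phi bs N x y p)) = filter (\<lambda>v. v \<le> ?k) (fst (Phi bs N x y q))"
    "filter (\<lambda>v. v \<le> ?k) (snd (Phi bs N x y p)) = filter (\<lambda>v. v \<le> ?k) (snd (Phi bs N x y q))"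
    using e by simp_all
  have "filter (\<lambda>v. v \<le> ?k) (fst (Phi bs N x y p)) = s1"
    "filter (\<lambda>v. v \<le> ?k) (snd (Phi bs N x y p)) = s2"
    "filter (\<lambda>v. v \<le> ?k) (fst (Phi bs N x y q)) = s1'"
    "filter (\<lambda>v. v \<le> ?k) (snd (Phi bs N x y q)) = s2'"
    unfolding ps qs Phi_def using f by (simp_all add: filter_empty_conv)
  then show "p = q" using e1 ps qs by simp
qed

lemma K_Iset:
  assumes N: "2*N = sum_list bs + x + y"
  shows "K (bs@[x,y]) = card (Iset bs N x y)"
proof -
  have "tableaux (bs@[x,y]) = Phi bs N x y ` Iset bs N x y"
    using Phi_in[OF N] tab_in_Phi[OF N] by auto
  then show ?thesis unfolding K_def using card_image[OF Phi_inj] by simp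
qed

lemma Iset_finite: "finite (Iset bs N x y)"
proof -
  let ?S = "{s. set s \<subseteq> {1..length bs} \<and> length s \<le> N}"
  have "Iset bs N x y \<subseteq> ?S \<times> ?S" unfolding Iset_def inner_def by auto
  moreover have "finite (?S \<times> ?S)" using finite_lists_length_le[of "{1..length bs}" N] by simp
  ultimately show ?thesis by (rule finite_subset)
qed

fun blocks :: "nat \<Rightarrow> nat list \<Rightarrow> nat list" where
  "blocks i [] = []"
| "blocks i (b#bs) = replicate b i @ blocks (Suc i) bs"

lemma blocks_set: "set (blocks i bs) \<subseteq> {i..<i+length bs}"
proof (induct bs arbitrary: i)
  case (Cons b bs)
  have "set (blocks (Suc i) bs) \<subseteq> {Suc i..<Suc i+length bs}" by (rule Cons)
  then show ?case by auto
qed simp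

lemma blocks_sorted: "sorted (blocks i bs)"
proof (induct bs arbitrary: i)
  case Nil then show ?case by simp
next
  case (Cons b bs)
  have "\<forall>v\<in>set (blocks (Suc i) bs). i \<le> v" using blocks_set[of "Suc i" bs] by auto
  then show ?case using Cons[of "Suc i"] by (auto simp: sorted_append)
qed

lemma blocks_length: "length (blocks i bs) = sum_list bs"
  by (induct bs arbitrary: i) auto

lemma blocks_count: "j < length bs \<Longrightarrow> count_list (blocks i bs) (i+j) = bs!j"
proof (induct bs arbitrary: i j)
  case Nil then show ?case by simp
next
  case (Cons b bs)
  show ?case
  proof (cases j)
    case 0
    have "i \<notin> set (blocks (Suc i) bs)" using blocks_set[of "Suc i" bs] by auto
    then show ?thesis using 0 by (simp add: count_list_replicate)
  next
    case (Suc j')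
    then have "count_list (blocks (Suc i) bs) (Suc i + j') = bs!j'" using Cons.hyps[of j' "Suc i"] Cons.prems by simp
    then show ?thesis using Suc by (simp add: count_list_replicate)
  qed
qed


lemma sorted_gap:
  fixes w :: "nat list"
  assumes so: "sorted w" and cnt: "\<forall>v. count_list w v \<le> L" and len: "j + L < length w"
  shows "w!j < w!(j+L)"
proof (rule ccontr)
  assume "\<not> w!j < w!(j+L)"
  moreover have "w!j \<le> w!(j+L)" using sorted_nth_mono[OF so, of j "j+L"] len by linarith
  ultimately have eq: "w!(j+L) = w!j" by simp
  define v where "v = w!j"
  have all: "w!m = v" if m: "j \<le> m" "m \<le> j+L" for m
  proof -
    have "w!j \<le> w!m" using sorted_nth_mono[OF so, of j m] m len by linarith
    moreover have "w!m \<le> w!(j+L)" using sorted_nth_mono[OF so, of m "j+L"] m len by linarith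
    ultimately show "w!m = v" using eq unfolding v_def by linarith
  qed
  have tk: "take (Suc L) (drop j w) = replicate (Suc L) v"
  proof (rule nth_equalityI)
    show "length (take (Suc L) (drop j w)) = length (replicate (Suc L) v)" using len by simp
    fix m assume "m < length (take (Suc L) (drop j w))"
    then have m: "m < Suc L" "j + m < length w" by auto
    then have "take (Suc L) (drop j w) ! m = w!(j+m)" by simp
    also have "\<dots> = v" using all[of "j+m"] m by simp
    finally show "take (Suc L) (drop j w) ! m = replicate (Suc L) v ! m" using m nth_replicate[of m "Suc L" v] by simp
  qed
  have c1: "count_list w v = count_list (take j w) v + count_list (drop j w) v"
    by (metis append_take_drop_id count_list_append)
  have c2: "count_list (drop j w) v = count_list (take (Suc L) (drop j w)) v + count_list (drop (Suc L) (drop j w)) v"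
    by (metis append_take_drop_id count_list_append)
  have "count_list (take (Suc L) (drop j w)) v = Suc L" using tk by (simp add: count_list_replicate)
  then have "count_list w v \<ge> Suc L" using c1 c2 by linarith
  moreover have "count_list w v \<le> L" using cnt by blast
  ultimately show False by linarith
qed

lemma Iset_sub:
  assumes "2*N = sum_list bs + \<alpha> + \<beta> + \<gamma>" "\<alpha> < \<gamma>"
  shows "Iset bs N \<alpha> (\<beta>+\<gamma>) \<subseteq> Iset bs N \<gamma> (\<beta>+\<alpha>)"
  using assms unfolding Iset_def by auto

theorem lemma2p2:
  fixes bs :: "nat list" and \<alpha> \<beta> \<gamma> :: nat
  assumes "reduced (bs @ [\<alpha>, \<beta>, \<gamma>])"
    and "\<alpha> \<le> \<beta>" and "\<beta> \<le> \<gamma>" and "\<alpha> < \<gamma>"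
  shows "K (bs @ [\<alpha>, \<beta> + \<gamma>]) < K (bs @ [\<gamma>, \<beta> + \<alpha>])"
proof -
  let ?A = "bs @ [\<alpha>, \<beta>, \<gamma>]"
  define k where "k = length bs"
  define B where "B = sum_list bs"
  define N where "N = n_of ?A - 1"
  have red: "valid ?A" "\<forall>i j. i < j \<and> j < length ?A \<longrightarrow> ?A ! i + ?A ! j \<le> N"
    using assms(1) unfolding reduced_def N_def by auto
  have sp: "\<forall>x\<in>set ?A. 0 < x" "even (sum_list ?A)"
    using red(1) unfolding valid_def schubert_problem_def by auto
  have pos: "0 < \<alpha>" "0 < \<beta>" "0 < \<gamma>" using sp(1) by auto
  have N2: "2*N = B + \<alpha> + \<beta> + \<gamma>" using sp(2) unfolding N_def n_of_def B_def by auto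
  have ab: "\<alpha> + \<beta> \<le> N" using red(2)[rule_format, of k "Suc k"] by (simp add: nth_append k_def)
  have bg: "\<beta> + \<gamma> \<le> N" using red(2)[rule_format, of "Suc k" "Suc (Suc k)"] by (simp add: nth_append k_def)
  have ba: "bs!i + \<gamma> \<le> N" if "i < k" for i
    using red(2)[rule_format, of i "Suc (Suc k)"] that by (simp add: nth_append k_def)
  have K1: "K (bs @ [\<alpha>, \<beta> + \<gamma>]) = card (Iset bs N \<alpha> (\<beta>+\<gamma>))"
    by (rule K_Iset) (use N2 B_def in simp)
  have K2: "K (bs @ [\<gamma>, \<beta> + \<alpha>]) = card (Iset bs N \<gamma> (\<beta>+\<alpha>))"
    by (rule K_Iset) (use N2 B_def in simp)
  have sub: "Iset bs N \<alpha> (\<beta>+\<gamma>) \<subseteq> Iset bs N \<gamma> (\<beta>+\<alpha>)"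
    by (rule Iset_sub) (use N2 B_def assms(4) in auto)
  define w where "w = blocks 1 bs"
  define L where "L = N - \<alpha> - 1"
  have lw: "length w = B" unfolding w_def B_def by (simp add: blocks_length)
  have sw: "sorted w" unfolding w_def by (rule blocks_sorted)
  have setw: "set w \<subseteq> {1..k}" using blocks_set[of 1 bs] unfolding w_def k_def by auto
  have cw: "count_list w i = bs!(i-1)" if "i \<in> {1..k}" for i
    using blocks_count[of "i-1" bs 1] that unfolding w_def k_def by auto
  have cwL: "\<forall>v. count_list w v \<le> L"
  proof
    fix v show "count_list w v \<le> L"
    proof (cases "v \<in> {1..k}")
      case True
      then have "v - 1 < k" by auto
      then show ?thesis using cw[OF True] ba[of "v-1"] assms(4) unfolding L_def by linarith
    next
      case False
      then have "v \<notin> set w" using setw by auto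
      then show ?thesis by simp
    qed
  qed
  define s1 where "s1 = take L w"
  define s2 where "s2 = drop L w"
  have LB: "L \<le> B" unfolding L_def using N2 bg by linarith
  have ls1: "length s1 = L" unfolding s1_def using LB lw by simp
  have ls2: "length s2 = B - L" unfolding s2_def using lw by simp
  have inn: "inner bs s1 s2" unfolding inner_def k_def[symmetric]
  proof (intro conjI)
    show "sorted s1" unfolding s1_def using sw by simp
    show "sorted s2" unfolding s2_def using sw by simp
    show "length s2 \<le> length s1" using ls1 ls2 N2 pos ab bg assms(2,3,4) unfolding L_def by linarith
    show "\<forall>j<length s2. s1 ! j < s2 ! j"
    proof (intro allI impI)
      fix j assume j: "j < length s2"
      have "j < L" using j ls1 ls2 N2 pos ab bg assms(2,3,4) unfolding L_def by linarith
      then have "s1!j = w!j" "s2!j = w!(L+j)" unfolding s1_def s2_def using j LB lw by auto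
      moreover have "w!j < w!(j+L)" by (rule sorted_gap[OF sw cwL]) (use j ls2 lw in auto)
      ultimately show "s1!j < s2!j" by (simp add: add.commute)
    qed
    show "set (s1 @ s2) \<subseteq> {1..k}" using setw unfolding s1_def s2_def
      by (metis append_take_drop_id)
    show "\<forall>i\<in>{1..k}. count_list (s1 @ s2) i = bs ! (i - 1)"
      using cw unfolding s1_def s2_def by simp
  qed
  have win: "(s1,s2) \<in> Iset bs N \<gamma> (\<beta>+\<alpha>)" unfolding Iset_def
    using inn ls1 ls2 N2 pos ab bg assms(2,3,4) LB unfolding L_def by auto
  have wout: "(s1,s2) \<notin> Iset bs N \<alpha> (\<beta>+\<gamma>)" unfolding Iset_def
    using ls1 ab pos unfolding L_def by auto
  have "Iset bs N \<alpha> (\<beta>+\<gamma>) \<subset> Iset bs N \<gamma> (\<beta>+\<alpha>)" using sub win wout by blast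
  then have "card (Iset bs N \<alpha> (\<beta>+\<gamma>)) < card (Iset bs N \<gamma> (\<beta>+\<alpha>))"
    by (rule psubset_card_mono[OF Iset_finite])
  then show ?thesis using K1 K2 by simp
qed

end
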